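(* On the carrier $\mathbb{F}_2^5$, with indices taken modulo $5$, define $((x_i)_{i=1}^5\diamond(y_i)_{i=1}^5)_i=1-x_{i+1}y_{i-1}$. This finite magma satisfies $\mathrm{x}\simeq(\mathrm{y}\diamond\mathrm{x})\diamond(\mathrm{x}\diamond(\mathrm{z}\diamond\mathrm{y}))$ but does not satisfy $\mathrm{x}\simeq(\mathrm{x}\diamond\mathrm{x})\diamond(\mathrm{x}\diamond\mathrm{x})$. Consequently the first law does not imply the second, even for finite magmas.
   Context: $\mathbb{F}_2$ is the field with two elements; arithmetic in each coordinate is in $\mathbb{F}_2$. A magma satisfies a law if the identity holds for all assignments of variables. *)

theory Defs
  imports "HOL-Analysis.Analysis" "HOL-Library.Z2"
begin

definition dmd :: "bit ^ 5 \<Rightarrow> bit ^ 5 \<Rightarrow> bit ^ 5" (infixl "\<diamond>" 70) where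
  "x \<diamond> y = (\<chi> i. 1 - x $ (i + 1) * y $ (i - 1))"

end

theory Submission
  imports Defs
begin

lemma bitid: "1 - (1 - b*a)*(1 - a*(1 - c*(b::bit))) = a"
  by (cases a; cases b; cases c) auto

lemma idx: "(i::5) + 1 + 1 = i - 1 - 1 - 1"
proof -
  have "(5::5) = 0" by simp
  then show ?thesis by (simp add: algebra_simps)
qed

lemma idx2: "(i::5) + 1 - 1 = i" "(i::5) - 1 + 1 = i" by simp_all

lemma law1: "x = (y \<diamond> x) \<diamond> (x \<diamond> (z \<diamond> y))"
  unfolding vec_eq_iff dmd_def
proof
  fix i :: 5
  show "x $ i = (\<chi> i. 1 - (\<chi> i. 1 - y $ (i + 1) * x $ (i - 1)) $ (i + 1) *
                 (\<chi> i. 1 - x $ (i + 1) * (\<chi> i. 1 - z $ (i + 1) * y $ (i - 1)) $ (i - 1)) $ (i - 1)) $ i"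
    apply (simp only: vec_lambda_beta idx2)
    apply (simp only: idx bitid)
    done
qed

definition cx :: "bit ^ 5" where "cx = (\<chi> i. if i = 4 then 1 else 0)"

lemma law2: "\<not> (\<forall>x :: bit ^ 5. x = (x \<diamond> x) \<diamond> (x \<diamond> x))"
proof
  assume "\<forall>x :: bit ^ 5. x = (x \<diamond> x) \<diamond> (x \<diamond> x)"
  then have "cx $ 4 = ((cx \<diamond> cx) \<diamond> (cx \<diamond> cx)) $ 4" by metis
  then show False by (simp add: cx_def dmd_def)
qed

lemma bit_UNIV: "(UNIV :: bit set) = {0, 1}"
  using bit_not_zero_iff by auto

instance bit :: finite
  by standard (simp add: bit_UNIV)

lemma fin: "finite (UNIV :: (bit ^ 5) set)" by simp

theorem mainTheorem18:
  shows "(\<forall>x y z :: bit ^ 5. x = (y \<diamond> x) \<diamond> (x \<diamond> (z \<diamond> y)))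
       \<and> \<not> (\<forall>x :: bit ^ 5. x = (x \<diamond> x) \<diamond> (x \<diamond> x))
       \<and> finite (UNIV :: (bit ^ 5) set)"
  using law1 law2 fin by blast

end
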